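(* Let $\Theta\colon\mathcal R\to L^0_P(\Omega;\mathbb R)$ be an infinitely divisible random measure with control measure $\chi$. Then every $f\in\mathcal S_{\rm det}$ satisfies \[\int_R\sup_{|\beta|\le1}a_\Theta(r,\beta f(r))\,\chi(dr)=\sup_{\gamma\in\mathcal S^1_{\rm det}}\int_Ra_\Theta(r,\gamma(r)f(r))\,\chi(dr).\]
   Context: Fix a probability space $(\Omega,\mathcal F,P)$. Let $R$ be a non-empty set and $\mathcal R$ a $\delta$-ring of subsets of $R$ (containing $\emptyset$, closed under finite unions, relative complements and countable intersections) with an increasing sequence $(R_k)\subseteq\mathcal R$ such that $\bigcup_kR_k=R$. An infinitely divisible random measure on $\mathcal R$ is a map $\Theta\colon\mathcal R\to L^0_P(\Omega;\mathbb R)$ which is $P$-a.s. countably additive on disjoint sequences in $\mathcal R$ with union in $\mathcal R$, has independent values on disjoint sets, and has infinitely divisible values. With $\tau(\alpha)=\alpha$ for $|\alpha|\le1$, $\tau(\alpha)=\alpha/|\alpha|$ otherwise, there exist a signed measure $a_0$, a measure $q_0$ on $\sigma(\mathcal R)$ and a $\sigma$-finite measure $\lambda_0$ on $\sigma(\mathcal R)\otimes\mathcal B(\mathbb R)$ with $E[e^{i\beta\Theta(A)}]=\exp\big(i\beta a_0(A)-\tfrac12\beta^2q_0(A)+\int(e^{i\beta\alpha}-1-i\beta\tau(\alpha))\lambda_0(A,d\alpha)\big)$. The control measure is $\chi(A)=|a_0|(A)+q_0(A)+\int(|\beta|^2\wedge1)\lambda_0(A,d\beta)$. Let $a=da_0/d\chi$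 and $\kappa$ a kernel with $\lambda_0(dr,d\beta)=\kappa(r,d\beta)\chi(dr)$; define $a_\Theta(r,\alpha)=\alpha a(r)+\int_{\mathbb R}(\tau(\alpha\beta)-\alpha\tau(\beta))\kappa(r,d\beta)$. $\mathcal S_{\rm det}$ is the set of functions $\sum_{k=1}^n\beta_k\mathbb 1_{A_k}$ with $\beta_k\in\mathbb R$ and disjoint $A_k\in\mathcal R$; $\mathcal S^1_{\rm det}$ is the subset with all $|\beta_k|\le1$. *)

theory Defs
  imports "HOL-Probability.Probability"
begin

definition delta_ring :: "'r set \<Rightarrow> 'r set set \<Rightarrow> bool" where
  "delta_ring R \<RR> \<longleftrightarrow> \<RR> \<subseteq> Pow R \<and> {} \<in> \<RR> \<and>
     (\<forall>A\<in>\<RR>. \<forall>B\<in>\<RR>. A \<union> B \<in> \<RR> \<and> A - B \<in> \<RR>) \<and>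
     (\<forall>A :: nat \<Rightarrow> 'r set. range A \<subseteq> \<RR> \<longrightarrow> (\<Inter>n. A n) \<in> \<RR>)"

definition admissible_space :: "'r set \<Rightarrow> 'r set set \<Rightarrow> bool" where
  "admissible_space R \<RR> \<longleftrightarrow> R \<noteq> {} \<and> delta_ring R \<RR> \<and>
     (\<exists>Rk :: nat \<Rightarrow> 'r set. range Rk \<subseteq> \<RR> \<and> incseq Rk \<and> (\<Union>k. Rk k) = R)"

fun conv_power :: "real measure \<Rightarrow> nat \<Rightarrow> real measure" where
  "conv_power \<nu> 0 = return borel 0"
| "conv_power \<nu> (Suc n) = convolution \<nu> (conv_power \<nu> n)"

definition inf_divisible :: "real measure \<Rightarrow> bool" where
  "inf_divisible \<mu> \<longleftrightarrow>
     (\<forall>n::nat. n > 0 \<longrightarrow> (\<exists>\<nu>. prob_space \<nu> \<and> sets \<nu> = sets borel \<and> conv_power \<nu> n = \<mu>))"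

definition ID_random_measure ::
  "'w measure \<Rightarrow> 'r set \<Rightarrow> 'r set set \<Rightarrow> ('r set \<Rightarrow> 'w \<Rightarrow> real) \<Rightarrow> bool" where
  "ID_random_measure P R \<RR> \<Theta> \<longleftrightarrow>
     prob_space P \<and> admissible_space R \<RR> \<and>
     (\<forall>A\<in>\<RR>. \<Theta> A \<in> borel_measurable P) \<and>
     (\<forall>A :: nat \<Rightarrow> 'r set. range A \<subseteq> \<RR> \<longrightarrow> disjoint_family A \<longrightarrow> (\<Union>n. A n) \<in> \<RR> \<longrightarrow>
        (AE \<omega> in P. (\<lambda>n. \<Theta> (A n) \<omega>) sums \<Theta> (\<Union>n. A n) \<omega>)) \<and>
     (\<forall>\<AA>. \<AA> \<subseteq> \<RR> \<longrightarrow> disjoint \<AA> \<longrightarrow> prob_space.indep_vars P (\<lambda>_. borel) \<Theta> \<AA>) \<and>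
     (\<forall>A\<in>\<RR>. inf_divisible (distr P borel (\<Theta> A)))"

definition tau :: "real \<Rightarrow> real" where
  "tau x = (if \<bar>x\<bar> \<le> 1 then x else x / \<bar>x\<bar>)"

definition aTheta :: "('r \<Rightarrow> real) \<Rightarrow> ('r \<Rightarrow> real measure) \<Rightarrow> 'r \<Rightarrow> real \<Rightarrow> real" where
  "aTheta a \<kappa> r \<alpha> = \<alpha> * a r + (\<integral>\<beta>. tau (\<alpha> * \<beta>) - \<alpha> * tau \<beta> \<partial>(\<kappa> r))"

definition S_det :: "'r set set \<Rightarrow> ('r \<Rightarrow> real) set" where
  "S_det \<RR> = {f. \<exists>(n::nat) (\<beta>::nat \<Rightarrow> real) (A::nat \<Rightarrow> 'r set).
      (\<forall>k<n. A k \<in> \<RR>) \<and> disjoint_family_on A {..<n} \<and>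
      f = (\<lambda>r. \<Sum>k<n. \<beta> k * indicator (A k) r)}"

definition S1_det :: "'r set set \<Rightarrow> ('r \<Rightarrow> real) set" where
  "S1_det \<RR> = {f. \<exists>(n::nat) (\<beta>::nat \<Rightarrow> real) (A::nat \<Rightarrow> 'r set).
      (\<forall>k<n. A k \<in> \<RR> \<and> \<bar>\<beta> k\<bar> \<le> 1) \<and> disjoint_family_on A {..<n} \<and>
      f = (\<lambda>r. \<Sum>k<n. \<beta> k * indicator (A k) r)}"

end

theory Submission
  imports Defs
begin
definition psi :: "real \<Rightarrow> real \<Rightarrow> real" where
  "psi s y = \<bar>min (s*y) 1 - s * min y 1\<bar>"

lemma psi_small: assumes "0 \<le> s" "s \<le> 1" "0 \<le> y"
  shows "psi s y = (if y \<le> 1 then 0 else min (s*(y-1)) (1-s))"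
proof (cases "y \<le> 1")
  case True
  then have "s*y \<le> 1" using assms by (simp add: mult_le_one)
  then show ?thesis using True by (simp add: psi_def)
next
  case False
  have sy: "s \<le> s*y" using False assms mult_left_mono[of 1 y s] by simp
  show ?thesis
  proof (cases "s*y \<le> 1")
    case True
    have "min (s*y) 1 = s*y" "min y 1 = 1" using True False by auto
    moreover have "s*(y-1) \<le> 1 - s" using True by (simp add: right_diff_distrib)
    ultimately show ?thesis using False sy unfolding psi_def by (simp add: right_diff_distrib)
  next
    case F2: False
    have "min (s*y) 1 = 1" "min y 1 = 1" using F2 False by auto
    moreover have "1 - s \<le> s*(y-1)" using F2 by (simp add: right_diff_distrib)
    ultimately show ?thesis using False assms unfolding psi_def by simp
  qed
qed

lemma psi_big: assumes "1 \<le> s" "0 \<le> y"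
  shows "psi s y = (if s*y \<le> 1 then 0 else min (s*y-1) (s-1))"
proof (cases "s*y \<le> 1")
  case True
  have "y \<le> s*y" using assms mult_right_mono[of 1 s y] by simp
  then have "y \<le> 1" using True by simp
  then show ?thesis using True by (simp add: psi_def)
next
  case False
  show ?thesis
  proof (cases "y \<le> 1")
    case True
    have "min (s*y) 1 = 1" "min y 1 = y" using True False by auto
    moreover have "s*y - 1 \<le> s - 1" using True assms mult_left_mono[of y 1 s] by simp
    ultimately show ?thesis using False unfolding psi_def by (simp add: min_def)
  next
    case F2: False
    have "min (s*y) 1 = 1" "min y 1 = 1" using F2 False by auto
    moreover have "s - 1 \<le> s*y - 1" using F2 assms mult_left_mono[of 1 y s] by simp
    ultimately show ?thesis using False assms unfolding psi_def by (simp add: min_def)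
  qed
qed

lemma psi_P1: assumes "0 \<le> s" "s \<le> 1" "0 \<le> y" shows "psi s y \<le> 2 * psi (1/2) y"
proof -
  have a: "psi s y = (if y \<le> 1 then 0 else min (s*(y-1)) (1-s))" using psi_small assms by blast
  have b: "psi (1/2) y = (if y \<le> 1 then 0 else min ((1/2)*(y-1)) (1-1/2))" using psi_small[of "1/2" y] assms by simp
  show ?thesis
  proof (cases "y \<le> 1")
    case True then show ?thesis using a b by simp
  next
    case False
    have "s*(y-1) \<le> y - 1" using False assms by (simp add: mult_left_le_one_le)
    moreover have p: "psi s y = min (s*(y-1)) (1-s)" using a False by simp
    moreover have "min (s*(y-1)) (1-s) \<le> s*(y-1)" "min (s*(y-1)) (1-s) \<le> 1-s" by auto
    ultimately have "psi s y \<le> y - 1" "psi s y \<le> 1" using assms by linarith+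
    then show ?thesis using b False by (simp add: min_def)
  qed
qed

lemma psi_P2: assumes "0 < s" "s < 1" "0 \<le> y"
  shows "psi (1/2) y \<le> (1 / (2 * s) + 1 / (2 * (1 - s))) * psi s y"
proof -
  have a: "psi s y = (if y \<le> 1 then 0 else min (s*(y-1)) (1-s))" using psi_small assms by simp
  have b: "psi (1/2) y = (if y \<le> 1 then 0 else min ((1/2)*(y-1)) (1-1/2))" using psi_small[of "1/2" y] assms by simp
  show ?thesis
  proof (cases "y \<le> 1")
    case True then show ?thesis using a b by simp
  next
    case False
    define K where "K = 1 / (2 * s) + 1 / (2 * (1 - s))"
    have K1: "(1/2)*(y-1) \<le> K * (s*(y-1))"
    proof -
      have "(1/2)*(y-1) = (1 / (2 * s)) * (s*(y-1))" using assms by simp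
      also have "\<dots> \<le> K * (s*(y-1))" unfolding K_def using assms False
        by (intro mult_right_mono) auto
      finally show ?thesis .
    qed
    have K2: "1 - 1/2 \<le> K * (1 - s)"
    proof -
      have "1 - 1/2 = (1 / (2 * (1 - s))) * (1-s)" using assms by simp
      also have "\<dots> \<le> K * (1-s)" unfolding K_def using assms False
        by (intro mult_right_mono) auto
      finally show ?thesis .
    qed
    have "min ((1/2)*(y-1)) (1-1/2) \<le> K * min (s*(y-1)) (1-s)"
      using K1 K2 by (simp add: min_def)
    then show ?thesis using a b False K_def by simp
  qed
qed

lemma psi_P4: assumes "1 \<le> s" "s \<le> s'" "0 \<le> y" shows "psi s y \<le> psi s' y"
proof -
  have a: "psi s y = (if s*y \<le> 1 then 0 else min (s*y-1) (s-1))" using psi_big assms by simp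
  have b: "psi s' y = (if s'*y \<le> 1 then 0 else min (s'*y-1) (s'-1))" using psi_big assms by simp
  have c: "s*y \<le> s'*y" using assms mult_right_mono by blast
  have "0 \<le> min (s'*y-1) (s'-1) \<or> s'*y \<le> 1" using assms by auto
  then show ?thesis using a b c assms by (auto simp: min_def)
qed

lemma psi_P5: assumes "0 \<le> s" "s \<le> M" "1 \<le> M" "0 \<le> y" shows "psi s y \<le> M^3 * min (y^2) 1"
proof (cases "s \<le> 1")
  case True
  have a: "psi s y = (if y \<le> 1 then 0 else min (s*(y-1)) (1-s))" using psi_small assms True by simp
  have "1 \<le> M^3" using assms by simp
  show ?thesis
  proof (cases "y \<le> 1")
    case True then show ?thesis using a assms by simp
  next
    case False
    then have "min (y^2) 1 = 1" by (simp add: min_def) (smt (verit) one_le_power)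
    have "psi s y \<le> 1" using a False assms by (auto simp: min_def)
    then show ?thesis using \<open>min (y^2) 1 = 1\<close> \<open>1 \<le> M^3\<close> by simp
  qed
next
  case False
  have a: "psi s y = (if s*y \<le> 1 then 0 else min (s*y-1) (s-1))" using psi_big False assms by simp
  show ?thesis
  proof (cases "s*y \<le> 1")
    case True then show ?thesis using a assms by simp
  next
    case F2: False
    have "psi s y \<le> M" using a F2 assms by (simp add: min_def)
    moreover have "M \<le> M^3 * min (y^2) 1"
    proof (cases "y \<le> 1")
      case True
      have "1 < s*y" using F2 by simp
      have "1 \<le> M*y" using F2 assms False mult_right_mono[of s M y] by simp
      then have "1 \<le> (M*y)^2" by (simp add: one_le_power)
      then have "1 \<le> M^2 * y^2" by (simp add: power_mult_distrib)
      then have "M \<le> M * (M^2 * y^2)" using assms by (simp add: mult_le_cancel_left1)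
      moreover have "min (y^2) 1 = y^2" using True assms by (simp add: power_le_one)
      ultimately show ?thesis by (simp add: power3_eq_cube power2_eq_square algebra_simps)
    next
      case False
      then have "min (y^2) 1 = 1" by (simp add: min_def) (smt (verit) one_le_power)
      moreover have "M \<le> M^3" using assms by (simp add: power3_eq_cube)
        (smt (verit) mult_le_cancel_left1 one_le_power power2_eq_square)
      ultimately show ?thesis by simp
    qed
    ultimately show ?thesis by linarith
  qed
qed

definition phi :: "real \<Rightarrow> real \<Rightarrow> real" where
  "phi al x = tau (al * x) - al * tau x"

lemma tau_alt: "tau x = x / max 1 \<bar>x\<bar>"
  by (auto simp: tau_def max_def)

lemma tau_cont: "continuous_on UNIV tau"
  unfolding tau_alt[abs_def] by (intro continuous_intros) auto

lemma tau_bound: "\<bar>tau x\<bar> \<le> 1"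
  by (auto simp: tau_def)

lemma tau_odd: "tau (- x) = - tau x"
  by (auto simp: tau_def)

lemma tau_nonneg: "0 \<le> x \<Longrightarrow> tau x = min x 1"
  by (auto simp: tau_def)



lemma abs_phi: "\<bar>phi al x\<bar> = psi \<bar>al\<bar> \<bar>x\<bar>"
proof -
  have "\<bar>phi al x\<bar> = \<bar>tau (\<bar>al\<bar>*\<bar>x\<bar>) - \<bar>al\<bar> * tau \<bar>x\<bar>\<bar>"
  proof (cases "al \<ge> 0")
    case True
    show ?thesis
    proof (cases "x \<ge> 0")
      case True
      then show ?thesis using \<open>al \<ge> 0\<close> by (simp add: phi_def)
    next
      case False
      then have "x = - \<bar>x\<bar>" by simp
      then have "phi al x = - (tau (\<bar>al\<bar>*\<bar>x\<bar>) - \<bar>al\<bar> * tau \<bar>x\<bar>)"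
        using \<open>al \<ge> 0\<close> unfolding phi_def by (metis abs_of_nonneg mult_minus_right tau_odd right_diff_distrib minus_diff_eq diff_minus_eq_add uminus_add_conv_diff)
      then show ?thesis by linarith
    qed
  next
    case False
    then have al: "al = - \<bar>al\<bar>" by simp
    show ?thesis
    proof (cases "x \<ge> 0")
      case True
      then have "phi al x = - (tau (\<bar>al\<bar>*\<bar>x\<bar>) - \<bar>al\<bar> * tau \<bar>x\<bar>)"
        unfolding phi_def by (subst al, subst (2) al) (simp add: tau_odd)
      then show ?thesis by linarith
    next
      case False
      then have x: "x = - \<bar>x\<bar>" by simp
      have "phi al x = (tau (\<bar>al\<bar>*\<bar>x\<bar>) - \<bar>al\<bar> * tau \<bar>x\<bar>)"
        unfolding phi_def by (subst al, subst x, subst (2) al, subst (2) x) (simp add: tau_odd)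
      then show ?thesis by simp
    qed
  qed
  also have "\<dots> = psi \<bar>al\<bar> \<bar>x\<bar>"
    by (simp add: psi_def tau_nonneg)
  finally show ?thesis .
qed


lemma kernel_nn_meas:
  fixes \<kappa> :: "'r \<Rightarrow> real measure" and u :: "real \<Rightarrow> ennreal"
  assumes ks: "\<And>r. sets (\<kappa> r) = sets borel"
    and km: "\<forall>B\<in>sets borel. (\<lambda>r. emeasure (\<kappa> r) B) \<in> borel_measurable M"
    and u: "u \<in> borel_measurable borel"
  shows "(\<lambda>r. \<integral>\<^sup>+x. u x \<partial>\<kappa> r) \<in> borel_measurable M"
  using u
proof (induction rule: borel_measurable_induct)
  case (cong f g)
  then have "f = g" by auto
  then show ?case using cong by simp
next
  case (set A)
  have "(\<lambda>r. \<integral>\<^sup>+x. indicator A x \<partial>\<kappa> r) = (\<lambda>r. emeasure (\<kappa> r) A)"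
    using set ks by (intro ext nn_integral_indicator) auto
  then show ?case using km set by auto
next
  case (mult u c)
  have "(\<lambda>r. \<integral>\<^sup>+x. c * u x \<partial>\<kappa> r) = (\<lambda>r. c * \<integral>\<^sup>+x. u x \<partial>\<kappa> r)"
    using mult ks by (intro ext nn_integral_cmult) (simp add: measurable_cong_sets[OF ks refl])
  moreover note mult(4)[measurable]
  ultimately show ?case by simp
next
  case (add u v)
  have "(\<lambda>r. \<integral>\<^sup>+x. v x + u x \<partial>\<kappa> r) = (\<lambda>r. (\<integral>\<^sup>+x. v x \<partial>\<kappa> r) + \<integral>\<^sup>+x. u x \<partial>\<kappa> r)"
    using add ks by (intro ext nn_integral_add) (simp_all add: measurable_cong_sets[OF ks refl])
  moreover have "(\<lambda>r. integral\<^sup>N (\<kappa> r) v + integral\<^sup>N (\<kappa> r) u) \<in> borel_measurable M"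
    by (intro borel_measurable_add) (use add in blast)+
  ultimately show ?case by simp
next
  case (seq U)
  have e: "(SUP i. U i) = (\<lambda>x. SUP i. U i x)" by (rule ext) (simp add: image_comp)
  have "(\<integral>\<^sup>+x. (SUP i. U i x) \<partial>\<kappa> r) = (SUP i. \<integral>\<^sup>+x. U i x \<partial>\<kappa> r)" for r
  proof (rule nn_integral_monotone_convergence_SUP)
    show "incseq U" by fact
    show "\<And>i. U i \<in> borel_measurable (\<kappa> r)"
      by (subst measurable_cong_sets[OF ks refl]) (rule seq)
  qed
  then have "(\<lambda>r. \<integral>\<^sup>+x. (SUP i. U i) x \<partial>\<kappa> r) = (\<lambda>r. SUP i. \<integral>\<^sup>+x. U i x \<partial>\<kappa> r)"
    unfolding e by simp
  moreover have "(\<lambda>r. SUP i. \<integral>\<^sup>+x. U i x \<partial>\<kappa> r) \<in> borel_measurable M"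
    by (rule borel_measurable_SUP) (use seq in blast)+
  ultimately show ?case by simp
qed

lemma kernel_int_meas:
  fixes \<kappa> :: "'r \<Rightarrow> real measure" and u :: "real \<Rightarrow> real"
  assumes ks: "\<And>r. sets (\<kappa> r) = sets borel"
    and km: "\<forall>B\<in>sets borel. (\<lambda>r. emeasure (\<kappa> r) B) \<in> borel_measurable M"
    and u: "u \<in> borel_measurable borel"
  shows "(\<lambda>r. \<integral>x. u x \<partial>\<kappa> r) \<in> borel_measurable M"
proof -
  have um: "u \<in> borel_measurable (\<kappa> r)" for r
    by (subst measurable_cong_sets[OF ks refl]) (rule u)
  have eq: "(\<integral>x. u x \<partial>\<kappa> r) = (if (\<integral>\<^sup>+x. ennreal (norm (u x)) \<partial>\<kappa> r) < \<infinity>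
      then enn2real (\<integral>\<^sup>+x. ennreal (u x) \<partial>\<kappa> r) - enn2real (\<integral>\<^sup>+x. ennreal (- u x) \<partial>\<kappa> r) else 0)" for r
  proof (cases "integrable (\<kappa> r) u")
    case True
    then show ?thesis using integrable_iff_bounded[of "\<kappa> r" u] by (simp add: real_lebesgue_integral_def)
  next
    case False
    then show ?thesis using integrable_iff_bounded[of "\<kappa> r" u] um by (simp add: not_integrable_integral_eq)
  qed
  have "(\<lambda>x. ennreal (norm (u x))) \<in> borel_measurable borel"
    unfolding real_norm_def by (rule measurable_compose[OF borel_measurable_abs[OF u] measurable_ennreal])
  moreover have "(\<lambda>x. ennreal (u x)) \<in> borel_measurable borel"
    by (rule measurable_compose[OF u measurable_ennreal])
  moreover have "(\<lambda>x. ennreal (- u x)) \<in> borel_measurable borel"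
    by (rule measurable_compose[OF borel_measurable_uminus[OF u] measurable_ennreal])
  ultimately have mmm: "(\<lambda>x. ennreal (norm (u x))) \<in> borel_measurable borel"
    "(\<lambda>x. ennreal (u x)) \<in> borel_measurable borel"
    "(\<lambda>x. ennreal (- u x)) \<in> borel_measurable borel" by blast+
  note this
  note mm = kernel_nn_meas[OF ks km this(1)] kernel_nn_meas[OF ks km this(2)] kernel_nn_meas[OF ks km this(3)]
  note m1 = mm(1) and m2 = mm(2) and m3 = mm(3)
  define A where "A = {r. (\<integral>\<^sup>+x. ennreal (norm (u x)) \<partial>\<kappa> r) < \<infinity>}"
  have "A \<inter> space M = {r \<in> space M. (\<integral>\<^sup>+x. ennreal (norm (u x)) \<partial>\<kappa> r) < (\<lambda>_. \<infinity>) r}"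
    unfolding A_def by auto
  also have "\<dots> \<in> sets M" by (rule borel_measurable_less[OF m1]) (rule measurable_const, simp)
  finally have As: "A \<inter> space M \<in> sets M" .
  have e2: "(\<lambda>r. \<integral>x. u x \<partial>\<kappa> r) = (\<lambda>r. if r \<in> A then
      enn2real (\<integral>\<^sup>+x. ennreal (u x) \<partial>\<kappa> r) - enn2real (\<integral>\<^sup>+x. ennreal (- u x) \<partial>\<kappa> r) else 0)"
    unfolding A_def using eq by auto
  show ?thesis unfolding e2
    by (rule measurable_If_set[OF _ _ As]) (use m2 m3 in \<open>auto intro: borel_measurable_diff borel_measurable_enn2real\<close>)
qed

lemma phi_meas: "phi al \<in> borel_measurable borel"
proof -
  have "continuous_on UNIV (phi al)" unfolding phi_def
    using tau_cont by (intro continuous_intros) (auto intro: continuous_on_compose2[OF tau_cont])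
  then show ?thesis by (rule borel_measurable_continuous_onI)
qed

lemma phi_cont:
  assumes ms: "sets \<mu> = sets borel" and G: "integrable \<mu> G"
    and bd: "\<And>al x. al \<in> S \<Longrightarrow> \<bar>phi al x\<bar> \<le> G x"
  shows "continuous_on S (\<lambda>al. \<integral>x. phi al x \<partial>\<mu>)"
proof (rule continuous_on_sequentiallyI)
  fix xs :: "nat \<Rightarrow> real" and a assume xs': "\<forall>n. xs n \<in> S" and a: "a \<in> S"
  then have xs: "\<And>n. xs n \<in> S" by blast
  assume lim: "xs \<longlonglongrightarrow> a"
  have pm: "phi b \<in> borel_measurable \<mu>" for b
    by (subst measurable_cong_sets[OF ms refl]) (rule phi_meas)
  have tc: "isCont tau y" for y using tau_cont by (simp add: continuous_on_eq_continuous_at)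
  have pl: "(\<lambda>n. phi (xs n) x) \<longlonglongrightarrow> phi a x" for x
    unfolding phi_def
    by (intro tendsto_intros isCont_tendsto_compose[OF tc] lim)
  show "(\<lambda>n. \<integral>x. phi (xs n) x \<partial>\<mu>) \<longlonglongrightarrow> \<integral>x. phi a x \<partial>\<mu>"
  proof (rule integral_dominated_convergence[where w=G])
    show "phi a \<in> borel_measurable \<mu>" by (rule pm)
    show "\<And>i. phi (xs i) \<in> borel_measurable \<mu>" by (rule pm)
    show "integrable \<mu> G" by (rule G)
    show "AE x in \<mu>. (\<lambda>i. phi (xs i) x) \<longlonglongrightarrow> phi a x" using pl by (intro AE_I2) 
    show "\<And>i. AE x in \<mu>. norm (phi (xs i) x) \<le> G x" using bd[OF xs] by (intro AE_I2) (simp only: real_norm_def)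
  qed
qed

definition gg :: "real measure \<Rightarrow> real \<Rightarrow> real \<Rightarrow> real" where
  "gg \<mu> ar al = al * ar + (\<integral>x. phi al x \<partial>\<mu>)"

lemma phi_0: "phi 0 x = 0" by (simp add: phi_def tau_def)

lemma phi_pm1: "\<bar>al\<bar> = 1 \<Longrightarrow> phi al x = 0"
  using abs_phi[of al x] by (simp add: psi_def)

lemma integrable_phi_bound:
  assumes ms: "sets \<mu> = sets borel" and i: "integrable \<mu> (phi b)"
    and bd: "\<And>x. \<bar>phi a x\<bar> \<le> K * \<bar>phi b x\<bar>"
  shows "integrable \<mu> (phi a)"
proof (rule Bochner_Integration.integrable_bound[where f="\<lambda>x. K * \<bar>phi b x\<bar>"])
  show "integrable \<mu> (\<lambda>x. K * \<bar>phi b x\<bar>)" using i by (intro integrable_mult_right integrable_abs)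
  show "phi a \<in> borel_measurable \<mu>" by (subst measurable_cong_sets[OF ms refl]) (rule phi_meas)
  show "AE x in \<mu>. norm (phi a x) \<le> norm (K * \<bar>phi b x\<bar>)"
    using bd by (intro AE_I2) (smt (verit, best) abs_ge_zero real_norm_def)
qed

lemma cont_side:
  assumes ms: "sets \<mu> = sets borel" and a0C: "\<bar>a0\<bar> < C" and a0: "a0 \<noteq> 0"
  shows "\<exists>a1. a1 \<noteq> a0 \<and> \<bar>a1\<bar> \<le> C \<and> continuous_on (closed_segment a0 a1) (gg \<mu> ar)"
proof -
  define I where "I al = (\<integral>x. phi al x \<partial>\<mu>)" for al
  have ggI: "gg \<mu> ar = (\<lambda>al. al * ar + I al)" unfolding gg_def I_def by auto
  have lin: "continuous_on S (gg \<mu> ar)" if "\<And>al. al \<in> S \<Longrightarrow> I al = 0" for S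
  proof -
    have "continuous_on S (\<lambda>al. al * ar)" by (intro continuous_intros)
    then show ?thesis by (rule continuous_on_cong[THEN iffD1, rotated 2]) (auto simp: ggI that)
  qed
  have dom: "continuous_on S (gg \<mu> ar)" if "integrable \<mu> G" "\<And>al x. al \<in> S \<Longrightarrow> \<bar>phi al x\<bar> \<le> G x" for S G
  proof -
    have "continuous_on S I" unfolding I_def by (rule phi_cont[OF ms that])
    then show ?thesis unfolding ggI by (intro continuous_intros)
  qed
  have I0: "I al = 0" if "\<not> integrable \<mu> (phi al)" for al
    unfolding I_def using that by (simp add: not_integrable_integral_eq)
  show ?thesis
  proof (cases "\<bar>a0\<bar> \<le> 1")
    case True
    have seg: "\<bar>al\<bar> \<le> 1" if "al \<in> closed_segment a0 0" for al
      using that True by (auto simp: closed_segment_eq_real_ivl split: if_splits)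
    have "continuous_on (closed_segment a0 0) (gg \<mu> ar)"
    proof (cases "integrable \<mu> (phi (1/2))")
      case True
      show ?thesis
      proof (rule dom[where G="\<lambda>x. 2 * \<bar>phi (1/2) x\<bar>"])
        show "integrable \<mu> (\<lambda>x. 2 * \<bar>phi (1/2) x\<bar>)" using True by (intro integrable_mult_right integrable_abs)
        fix al x assume "al \<in> closed_segment a0 0"
        then have "\<bar>al\<bar> \<le> 1" by (rule seg)
        then show "\<bar>phi al x\<bar> \<le> 2 * \<bar>phi (1/2) x\<bar>"
          unfolding abs_phi using psi_P1[of "\<bar>al\<bar>" "\<bar>x\<bar>"] by simp
      qed
    next
      case False
      show ?thesis
      proof (rule lin)
        fix al assume "al \<in> closed_segment a0 0"
        then have al1: "\<bar>al\<bar> \<le> 1" by (rule seg)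
        show "I al = 0"
        proof (cases "al = 0 \<or> \<bar>al\<bar> = 1")
          case True
          then have "phi al = (\<lambda>x. 0)" using phi_0 phi_pm1 by auto
          then show ?thesis unfolding I_def by simp
        next
          case F2: False
          then have "0 < \<bar>al\<bar>" "\<bar>al\<bar> < 1" using al1 by auto
          have "\<not> integrable \<mu> (phi al)"
          proof
            assume "integrable \<mu> (phi al)"
            then have "integrable \<mu> (phi (1/2))"
              by (rule integrable_phi_bound[OF ms _ , where K="1 / (2 * \<bar>al\<bar>) + 1 / (2 * (1 - \<bar>al\<bar>))"])
                 (use psi_P2[OF \<open>0 < \<bar>al\<bar>\<close> \<open>\<bar>al\<bar> < 1\<close>] in \<open>simp add: abs_phi\<close>)
            then show False using False by simp
          qed
          then show ?thesis by (rule I0)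
        qed
      qed
    qed
    then show ?thesis using a0 a0C by (intro exI[of _ 0]) auto
  next
    case False
    define sg where "sg = (if a0 > 0 then 1 else -1 :: real)"
    have sg: "\<bar>sg\<bar> = 1" "sg * \<bar>a0\<bar> = a0" using a0 by (auto simp: sg_def)
    show ?thesis
    proof (cases "integrable \<mu> (phi a0)")
      case True
      have seg: "1 \<le> \<bar>al\<bar> \<and> \<bar>al\<bar> \<le> \<bar>a0\<bar>" if "al \<in> closed_segment a0 sg" for al
        using that False unfolding sg_def by (auto simp: closed_segment_eq_real_ivl split: if_splits)
      have "continuous_on (closed_segment a0 sg) (gg \<mu> ar)"
      proof (rule dom[where G="\<lambda>x. \<bar>phi a0 x\<bar>"])
        show "integrable \<mu> (\<lambda>x. \<bar>phi a0 x\<bar>)" using True by (intro integrable_abs)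
        fix al x assume "al \<in> closed_segment a0 sg"
        then have "1 \<le> \<bar>al\<bar>" "\<bar>al\<bar> \<le> \<bar>a0\<bar>" using seg by auto
        then show "\<bar>phi al x\<bar> \<le> \<bar>phi a0 x\<bar>"
          unfolding abs_phi by (intro psi_P4) auto
      qed
      moreover have "sg \<noteq> a0" "\<bar>sg\<bar> \<le> C" using False sg a0C by auto
      ultimately show ?thesis by blast
    next
      case F2: False
      have seg: "\<bar>a0\<bar> \<le> \<bar>al\<bar>" if "al \<in> closed_segment a0 (sg * C)" for al
        using that False a0C unfolding sg_def by (auto simp: closed_segment_eq_real_ivl split: if_splits)
      have "continuous_on (closed_segment a0 (sg * C)) (gg \<mu> ar)"
      proof (rule lin)
        fix al assume "al \<in> closed_segment a0 (sg * C)"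
        then have h: "\<bar>a0\<bar> \<le> \<bar>al\<bar>" by (rule seg)
        have "\<not> integrable \<mu> (phi al)"
        proof
          assume "integrable \<mu> (phi al)"
          then have "integrable \<mu> (phi a0)"
            by (rule integrable_phi_bound[OF ms _ , where K=1])
               (use psi_P4[of "\<bar>a0\<bar>" "\<bar>al\<bar>"] h False in \<open>simp add: abs_phi\<close>)
          then show False using F2 by simp
        qed
        then show "I al = 0" by (rule I0)
      qed
      moreover have "sg * C \<noteq> a0" "\<bar>sg * C\<bar> \<le> C" using sg a0C by (auto simp: abs_mult)
      ultimately show ?thesis by blast
    qed
  qed
qed

lemma rat_side:
  fixes h :: "real \<Rightarrow> real"
  assumes b0: "\<bar>b0\<bar> \<le> 1" and b1: "\<bar>b1\<bar> \<le> 1" and ne: "b1 \<noteq> b0"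
    and cont: "continuous_on (closed_segment b0 b1) h" and e: "0 < e"
  shows "\<exists>q\<in>\<rat>. \<bar>q\<bar> \<le> 1 \<and> h b0 - e < h q"
proof -
  have b0S: "b0 \<in> closed_segment b0 b1" by simp
  obtain d where d: "d > 0" "\<And>x. x \<in> closed_segment b0 b1 \<Longrightarrow> dist x b0 < d \<Longrightarrow> dist (h x) (h b0) < e"
    using cont b0S e unfolding continuous_on_iff by metis
  define d' where "d' = min \<bar>b1 - b0\<bar> (d/2)"
  have d': "d' > 0" "d' \<le> \<bar>b1 - b0\<bar>" "d' < d" using d ne unfolding d'_def by auto
  obtain q where q: "q \<in> \<rat>" "q \<in> closed_segment b0 b1" "\<bar>q - b0\<bar> < d"
  proof (cases "b0 < b1")
    case True
    obtain q where "q \<in> \<rat>" "b0 < q" "q < b0 + d'" using Rats_dense_in_real[of b0 "b0 + d'"] d' by auto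
    then show ?thesis using that[of q] d' True by (auto simp: closed_segment_eq_real_ivl)
  next
    case False
    obtain q where "q \<in> \<rat>" "b0 - d' < q" "q < b0" using Rats_dense_in_real[of "b0 - d'" b0] d' by auto
    then show ?thesis using that[of q] d' False ne by (auto simp: closed_segment_eq_real_ivl)
  qed
  have "\<bar>q\<bar> \<le> 1" using q(2) b0 b1 by (auto simp: closed_segment_eq_real_ivl split: if_splits)
  moreover have "dist (h q) (h b0) < e" using d(2)[OF q(2)] q(3) by (simp add: dist_real_def)
  ultimately show ?thesis using q(1) by (intro bexI[of _ q]) (auto simp: dist_real_def)
qed

lemma approx_rat:
  assumes ms: "sets \<mu> = sets borel" and b0: "\<bar>b0\<bar> \<le> 1" and e: "0 < e"
  shows "\<exists>q\<in>\<rat>. \<bar>q\<bar> \<le> 1 \<and> gg \<mu> ar (b0 * c) - e < gg \<mu> ar (q * c)"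
proof (cases "c = 0 \<or> b0 = 0 \<or> \<bar>b0\<bar> = 1")
  case True
  then have "c = 0 \<or> b0 = 0 \<or> b0 = 1 \<or> b0 = -1" by arith
  then have "b0 \<in> \<rat> \<or> c = 0" by auto
  then show ?thesis
  proof
    assume "b0 \<in> \<rat>" then show ?thesis using b0 e by (intro bexI[of _ b0]) auto
  next
    assume "c = 0" then show ?thesis using e by (intro bexI[of _ 0]) auto
  qed
next
  case False
  then have c: "c \<noteq> 0" and a0: "b0 * c \<noteq> 0" and lt: "\<bar>b0 * c\<bar> < \<bar>c\<bar>"
    using b0 by (auto simp: abs_mult)
  obtain a1 where a1: "a1 \<noteq> b0 * c" "\<bar>a1\<bar> \<le> \<bar>c\<bar>" and ct: "continuous_on (closed_segment (b0*c) a1) (gg \<mu> ar)"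
    using cont_side[OF ms lt a0] by blast
  define b1 where "b1 = a1 / c"
  have b1c: "b1 * c = a1" using c unfolding b1_def by simp
  have b1: "\<bar>b1\<bar> \<le> 1" using a1 c unfolding b1_def by (simp add: abs_divide divide_le_eq_1)
  have ne: "b1 \<noteq> b0" using a1 b1c by auto
  have sub: "(\<lambda>b. b * c) ` closed_segment b0 b1 \<subseteq> closed_segment (b0*c) a1"
  proof
    fix y assume "y \<in> (\<lambda>b. b * c) ` closed_segment b0 b1"
    then obtain b where b: "b \<in> closed_segment b0 b1" "y = b * c" by auto
    then obtain u where u: "0 \<le> u" "u \<le> 1" "b = (1 - u) * b0 + u * b1"
      unfolding closed_segment_def by auto
    have "y = (1 - u) * (b0 * c) + u * a1" using b(2) u(3) b1c by (simp add: algebra_simps)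
    then show "y \<in> closed_segment (b0*c) a1" using u unfolding closed_segment_def by auto
  qed
  have "continuous_on (closed_segment b0 b1) (\<lambda>b. gg \<mu> ar (b * c))"
    by (rule continuous_on_compose2[OF ct _ sub]) (intro continuous_intros)
  from rat_side[OF b0 b1 ne this e] show ?thesis .
qed

lemma Sup_approx_eq:
  fixes X Y :: "real set"
  assumes sub: "Y \<subseteq> X" and ne: "Y \<noteq> {}" and ap: "\<And>x e. x \<in> X \<Longrightarrow> 0 < e \<Longrightarrow> \<exists>y\<in>Y. x - e < y"
  shows "Sup X = Sup Y"
proof (cases "bdd_above Y")
  case True
  have le: "x \<le> Sup Y" if xX: "x \<in> X" for x
  proof (rule ccontr)
    assume "\<not> x \<le> Sup Y"
    then obtain y where "y \<in> Y" "x - (x - Sup Y) < y" using ap[OF xX, of "x - Sup Y"] by auto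
    then show False using cSup_upper[OF _ True] by fastforce
  qed
  have bX: "bdd_above X" using le by (auto simp: bdd_above_def)
  have "Sup X \<le> Sup Y" using ne sub le by (intro cSup_least) auto
  moreover have "Sup Y \<le> Sup X" using ne sub bX by (intro cSup_subset_mono) auto
  ultimately show ?thesis by simp
next
  case False
  then have "\<not> bdd_above X" using sub bdd_above_mono by metis
  then have "(\<lambda>z. \<forall>x\<in>X. x \<le> z) = (\<lambda>z. \<forall>x\<in>Y. x \<le> z)" using False by (auto simp: bdd_above_def fun_eq_iff)
  then show ?thesis unfolding Sup_real_def by simp
qed

lemma sup_eq_rat:
  assumes ms: "sets \<mu> = sets borel"
  shows "(SUP b\<in>{-1..1}. gg \<mu> ar (b * c)) = (SUP q\<in>\<rat> \<inter> {-1..1}. gg \<mu> ar (q * c))"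
proof (rule Sup_approx_eq)
  show "(\<lambda>q. gg \<mu> ar (q * c)) ` (\<rat> \<inter> {-1..1}) \<subseteq> (\<lambda>b. gg \<mu> ar (b * c)) ` {-1..1}" by auto
  show "(\<lambda>q. gg \<mu> ar (q * c)) ` (\<rat> \<inter> {-1..1}) \<noteq> {}" by auto
  fix x e assume "x \<in> (\<lambda>b. gg \<mu> ar (b * c)) ` {-1..1}" "0 < (e::real)"
  then obtain b0 where b0: "b0 \<in> {-1..1}" "x = gg \<mu> ar (b0 * c)" by auto
  then have "\<bar>b0\<bar> \<le> 1" by auto
  from approx_rat[OF ms this \<open>0 < e\<close>, of ar c] obtain q where "q \<in> \<rat>" "\<bar>q\<bar> \<le> 1" "x - e < gg \<mu> ar (q * c)"
    using b0 by auto
  then have "q \<in> \<rat> \<inter> {-1..1}" by auto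
  then show "\<exists>y\<in>(\<lambda>q. gg \<mu> ar (q * c)) ` (\<rat> \<inter> {-1..1}). x - e < y"
    using \<open>x - e < gg \<mu> ar (q * c)\<close> by blast
qed

lemma gg_0: "gg \<mu> ar 0 = 0" by (simp add: gg_def phi_0)

lemma gg_bound:
  assumes ms: "sets \<mu> = sets borel" and L: "(\<integral>\<^sup>+x. ennreal (min (x\<^sup>2) 1) \<partial>\<mu>) < \<infinity>"
    and al: "\<bar>al\<bar> \<le> M" and M: "1 \<le> M"
  shows "\<bar>gg \<mu> ar al\<bar> \<le> M * \<bar>ar\<bar> + M^3 * enn2real (\<integral>\<^sup>+x. ennreal (min (x\<^sup>2) 1) \<partial>\<mu>)"
proof -
  define m where "m x = min (x\<^sup>2) 1" for x :: real
  have mb: "m \<in> borel_measurable borel" unfolding m_def by measurable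
  have mm: "m \<in> borel_measurable \<mu>" by (subst measurable_cong_sets[OF ms refl]) (rule mb)
  have mi: "integrable \<mu> m"
  proof (subst integrable_iff_bounded, intro conjI)
    show "m \<in> borel_measurable \<mu>" by (rule mm)
    have "(\<lambda>x. ennreal (norm (m x))) = (\<lambda>x. ennreal (min (x\<^sup>2) 1))" by (auto simp: m_def)
    then show "(\<integral>\<^sup>+x. ennreal (norm (m x)) \<partial>\<mu>) < \<infinity>" using L by simp
  qed
  have bd: "\<bar>phi al x\<bar> \<le> M^3 * m x" for x
    unfolding abs_phi m_def using psi_P5[of "\<bar>al\<bar>" M "\<bar>x\<bar>"] al M by simp
  have pm: "phi al \<in> borel_measurable \<mu>" by (subst measurable_cong_sets[OF ms refl]) (rule phi_meas)
  have pi: "integrable \<mu> (phi al)"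
  proof (rule Bochner_Integration.integrable_bound[where f="\<lambda>x. M^3 * m x"])
    show "integrable \<mu> (\<lambda>x. M^3 * m x)" using mi by (rule integrable_mult_right)
    show "phi al \<in> borel_measurable \<mu>" by (rule pm)
    have "0 \<le> M^3 * m x" for x using M by (simp add: m_def)
    then show "AE x in \<mu>. norm (phi al x) \<le> norm (M^3 * m x)"
      using bd by (intro AE_I2) simp
  qed
  have "\<bar>\<integral>x. phi al x \<partial>\<mu>\<bar> \<le> (\<integral>x. \<bar>phi al x\<bar> \<partial>\<mu>)"
    using integral_norm_bound[of \<mu> "phi al"] by simp
  also have "\<dots> \<le> (\<integral>x. M^3 * m x \<partial>\<mu>)"
    by (rule integral_mono) (use pi mi bd in \<open>auto intro: integrable_abs\<close>)
  also have "\<dots> = M^3 * (\<integral>x. m x \<partial>\<mu>)" by simp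
  also have "(\<integral>x. m x \<partial>\<mu>) = enn2real (\<integral>\<^sup>+x. ennreal (m x) \<partial>\<mu>)"
  proof (rule integral_eq_nn_integral)
    show "AE x in \<mu>. 0 \<le> m x" by (simp add: m_def)
    show "m \<in> borel_measurable \<mu>" by (rule mm)
  qed
  finally have i: "\<bar>\<integral>x. phi al x \<partial>\<mu>\<bar> \<le> M^3 * enn2real (\<integral>\<^sup>+x. ennreal (min (x\<^sup>2) 1) \<partial>\<mu>)"
    unfolding m_def by simp
  have "\<bar>al * ar\<bar> \<le> M * \<bar>ar\<bar>" using al by (simp add: abs_mult mult_right_mono)
  then show ?thesis using i unfolding gg_def by linarith
qed

lemma disint:
  fixes lam0 :: "('r \<times> real) measure" and chi :: "'r measure" and \<kappa> :: "'r \<Rightarrow> real measure"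
  assumes sl: "sets lam0 = sets (S \<Otimes>\<^sub>M borel)" and sc: "sets chi = sets S"
    and ks: "\<And>r. sets (\<kappa> r) = sets borel"
    and km: "\<forall>B\<in>sets borel. (\<lambda>r. emeasure (\<kappa> r) B) \<in> borel_measurable chi"
    and dis: "\<forall>X\<in>sets lam0. emeasure lam0 X = (\<integral>\<^sup>+r. emeasure (\<kappa> r) (Pair r -` X) \<partial>chi)"
    and A: "A \<in> sets S"
    and u: "u \<in> borel_measurable borel"
  shows "(\<integral>\<^sup>+p. indicator (A \<times> UNIV) p * u (snd p) \<partial>lam0) = (\<integral>\<^sup>+r. indicator A r * (\<integral>\<^sup>+x. u x \<partial>\<kappa> r) \<partial>chi)"
proof -
  have Am: "A \<in> sets chi" using A sc by simp
  have IK: "(\<lambda>r. indicator A r * (\<integral>\<^sup>+x. g x \<partial>\<kappa> r)) \<in> borel_measurable chi"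
    if "g \<in> borel_measurable borel" for g :: "real \<Rightarrow> ennreal"
    by (intro borel_measurable_times_ennreal borel_measurable_indicator Am kernel_nn_meas[OF ks km that])
  have AU: "A \<times> UNIV \<in> sets (S \<Otimes>\<^sub>M borel)" using A by (intro pair_measureI) auto
  have IL: "(\<lambda>p. indicator (A \<times> UNIV) p * g (snd p)) \<in> borel_measurable lam0"
    if "g \<in> borel_measurable borel" for g :: "real \<Rightarrow> ennreal"
  proof -
    have 1: "(indicator (A \<times> UNIV) :: 'r \<times> real \<Rightarrow> ennreal) \<in> borel_measurable (S \<Otimes>\<^sub>M borel)" by (rule borel_measurable_indicator[OF AU])
    have 2: "(\<lambda>p. g (snd p)) \<in> borel_measurable (S \<Otimes>\<^sub>M borel)" by (rule measurable_compose[OF measurable_snd that])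
    show ?thesis by (subst measurable_cong_sets[OF sl refl]) (rule borel_measurable_times_ennreal[OF 1 2])
  qed
  have KM: "g \<in> borel_measurable (\<kappa> r)" if "g \<in> borel_measurable borel" for g :: "real \<Rightarrow> ennreal" and r
    by (subst measurable_cong_sets[OF ks refl]) (rule that)
  show ?thesis
  using u
  proof (induction rule: borel_measurable_induct)
    case (cong f g)
    then have "f = g" by auto
    then show ?case using cong by simp
  next
    case (set B)
    have AB: "A \<times> B \<in> sets lam0" using A set sl by auto
    have "(\<integral>\<^sup>+p. indicator (A \<times> UNIV) p * indicator B (snd p) \<partial>lam0) = (\<integral>\<^sup>+p. indicator (A \<times> B) p \<partial>lam0)"
      by (intro nn_integral_cong) (auto simp: indicator_def)
    also have "\<dots> = emeasure lam0 (A \<times> B)" using AB by simp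
    also have "\<dots> = (\<integral>\<^sup>+r. emeasure (\<kappa> r) (Pair r -` (A \<times> B)) \<partial>chi)" using dis AB by blast
    also have "\<dots> = (\<integral>\<^sup>+r. indicator A r * (\<integral>\<^sup>+x. indicator B x \<partial>\<kappa> r) \<partial>chi)"
    proof (intro nn_integral_cong)
      fix r
      have "(\<integral>\<^sup>+x. indicator B x \<partial>\<kappa> r) = emeasure (\<kappa> r) B" using set ks by (intro nn_integral_indicator) auto
      then show "emeasure (\<kappa> r) (Pair r -` (A \<times> B)) = indicator A r * (\<integral>\<^sup>+x. indicator B x \<partial>\<kappa> r)"
        by (cases "r \<in> A") (auto simp: vimage_def)
    qed
    finally show ?case .
  next
    case (mult v c)
    have vb: "v \<in> borel_measurable borel" by (fact mult)
    have IH: "(\<integral>\<^sup>+p. indicator (A \<times> UNIV) p * v (snd p) \<partial>lam0) = (\<integral>\<^sup>+r. indicator A r * (\<integral>\<^sup>+x. v x \<partial>\<kappa> r) \<partial>chi)"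
      by (fact mult)
    have "(\<integral>\<^sup>+p. indicator (A \<times> UNIV) p * (c * v (snd p)) \<partial>lam0) = (\<integral>\<^sup>+p. c * (indicator (A \<times> UNIV) p * v (snd p)) \<partial>lam0)"
      by (simp add: ac_simps)
    also have "\<dots> = c * (\<integral>\<^sup>+p. indicator (A \<times> UNIV) p * v (snd p) \<partial>lam0)" by (rule nn_integral_cmult[OF IL[OF vb]])
    also have "\<dots> = c * (\<integral>\<^sup>+r. indicator A r * (\<integral>\<^sup>+x. v x \<partial>\<kappa> r) \<partial>chi)" by (simp only: IH)
    also have "\<dots> = (\<integral>\<^sup>+r. c * (indicator A r * (\<integral>\<^sup>+x. v x \<partial>\<kappa> r)) \<partial>chi)"
      by (rule nn_integral_cmult[symmetric, OF IK[OF vb]])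
    also have "\<dots> = (\<integral>\<^sup>+r. indicator A r * (\<integral>\<^sup>+x. c * v x \<partial>\<kappa> r) \<partial>chi)"
      by (intro nn_integral_cong) (simp add: nn_integral_cmult[OF KM[OF vb]] ac_simps)
    finally show ?case .
  next
    case (add v w)
    have vb: "v \<in> borel_measurable borel" by (fact add)
    have wb: "w \<in> borel_measurable borel" by (fact add)
    have IHv: "(\<integral>\<^sup>+p. indicator (A \<times> UNIV) p * v (snd p) \<partial>lam0) = (\<integral>\<^sup>+r. indicator A r * (\<integral>\<^sup>+x. v x \<partial>\<kappa> r) \<partial>chi)" by (fact add)
    have IHw: "(\<integral>\<^sup>+p. indicator (A \<times> UNIV) p * w (snd p) \<partial>lam0) = (\<integral>\<^sup>+r. indicator A r * (\<integral>\<^sup>+x. w x \<partial>\<kappa> r) \<partial>chi)" by (fact add)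
    have "(\<integral>\<^sup>+p. indicator (A \<times> UNIV) p * (w (snd p) + v (snd p)) \<partial>lam0)
        = (\<integral>\<^sup>+p. indicator (A \<times> UNIV) p * w (snd p) + indicator (A \<times> UNIV) p * v (snd p) \<partial>lam0)"
      by (simp add: distrib_left)
    also have "\<dots> = (\<integral>\<^sup>+p. indicator (A \<times> UNIV) p * w (snd p) \<partial>lam0) + (\<integral>\<^sup>+p. indicator (A \<times> UNIV) p * v (snd p) \<partial>lam0)"
      by (rule nn_integral_add[OF IL[OF wb] IL[OF vb]])
    also have "\<dots> = (\<integral>\<^sup>+r. indicator A r * (\<integral>\<^sup>+x. w x \<partial>\<kappa> r) \<partial>chi) + (\<integral>\<^sup>+r. indicator A r * (\<integral>\<^sup>+x. v x \<partial>\<kappa> r) \<partial>chi)"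
      by (simp only: IHv IHw)
    also have "\<dots> = (\<integral>\<^sup>+r. indicator A r * (\<integral>\<^sup>+x. w x \<partial>\<kappa> r) + indicator A r * (\<integral>\<^sup>+x. v x \<partial>\<kappa> r) \<partial>chi)"
      by (rule nn_integral_add[symmetric, OF IK[OF wb] IK[OF vb]])
    also have "\<dots> = (\<integral>\<^sup>+r. indicator A r * (\<integral>\<^sup>+x. w x + v x \<partial>\<kappa> r) \<partial>chi)"
      by (intro nn_integral_cong) (simp add: nn_integral_add[OF KM[OF wb] KM[OF vb]] distrib_left)
    finally show ?case .
  next
    case (seq U)
    have Ub: "U i \<in> borel_measurable borel" for i by (fact seq)
    have IH: "(\<integral>\<^sup>+p. indicator (A \<times> UNIV) p * U i (snd p) \<partial>lam0) = (\<integral>\<^sup>+r. indicator A r * (\<integral>\<^sup>+x. U i x \<partial>\<kappa> r) \<partial>chi)" for i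
      by (fact seq)
    have inc: "incseq U" by (fact seq)
    have e: "(SUP i. U i) = (\<lambda>x. SUP i. U i x)" by (rule ext) (simp add: image_comp)
    have "(\<integral>\<^sup>+p. indicator (A \<times> UNIV) p * (SUP i. U i) (snd p) \<partial>lam0)
        = (\<integral>\<^sup>+p. (SUP i. indicator (A \<times> UNIV) p * U i (snd p)) \<partial>lam0)"
      unfolding e by (simp add: SUP_mult_left_ennreal)
    also have "\<dots> = (SUP i. \<integral>\<^sup>+p. indicator (A \<times> UNIV) p * U i (snd p) \<partial>lam0)"
    proof (rule nn_integral_monotone_convergence_SUP)
      show "incseq (\<lambda>i p. indicator (A \<times> UNIV) p * U i (snd p))"
        using inc by (auto simp: incseq_def le_fun_def intro!: mult_left_mono)
    qed (rule IL[OF Ub])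
    also have "\<dots> = (SUP i. \<integral>\<^sup>+r. indicator A r * (\<integral>\<^sup>+x. U i x \<partial>\<kappa> r) \<partial>chi)" by (simp only: IH)
    also have "\<dots> = (\<integral>\<^sup>+r. (SUP i. indicator A r * (\<integral>\<^sup>+x. U i x \<partial>\<kappa> r)) \<partial>chi)"
    proof (rule nn_integral_monotone_convergence_SUP[symmetric])
      show "incseq (\<lambda>i r. indicator A r * (\<integral>\<^sup>+x. U i x \<partial>\<kappa> r))"
        using inc by (auto simp: incseq_def le_fun_def intro!: mult_left_mono nn_integral_mono)
    qed (rule IK[OF Ub])
    also have "\<dots> = (\<integral>\<^sup>+r. indicator A r * (\<integral>\<^sup>+x. (SUP i. U i) x \<partial>\<kappa> r) \<partial>chi)"
    proof (intro nn_integral_cong)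
      fix r
      have "(\<integral>\<^sup>+x. (SUP i. U i x) \<partial>\<kappa> r) = (SUP i. \<integral>\<^sup>+x. U i x \<partial>\<kappa> r)"
        by (rule nn_integral_monotone_convergence_SUP[OF inc KM[OF Ub]])
      then show "(SUP i. indicator A r * (\<integral>\<^sup>+x. U i x \<partial>\<kappa> r)) = indicator A r * (\<integral>\<^sup>+x. (SUP i. U i) x \<partial>\<kappa> r)"
        unfolding e by (simp add: SUP_mult_left_ennreal)
    qed
    finally show ?case .
  qed
qed

lemma dr_inter:
  assumes dr: "delta_ring R \<RR>" and A: "A \<in> \<RR>" and E: "E \<in> sigma_sets R \<RR>"
  shows "A \<inter> E \<in> \<RR>"
  using E
proof induction
  case (Basic a)
  have "A \<inter> a = A - (A - a)" by auto
  then show ?case using dr A Basic unfolding delta_ring_def by auto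
next
  case Empty
  then show ?case using dr unfolding delta_ring_def by auto
next
  case (Compl a)
  have "A \<subseteq> R" using dr A unfolding delta_ring_def by auto
  then have "A \<inter> (R - a) = A - (A \<inter> a)" by auto
  then show ?case using dr A Compl unfolding delta_ring_def by auto
next
  case (Union a)
  define X where "X = (\<Inter>i. A - (A \<inter> a i))"
  have e: "A \<inter> (\<Union>i. a i) = A - X" unfolding X_def by auto
  have "range (\<lambda>i. A - (A \<inter> a i)) \<subseteq> \<RR>" using dr A Union unfolding delta_ring_def by auto
  then have "X \<in> \<RR>" using dr unfolding delta_ring_def X_def by blast
  then have "A - X \<in> \<RR>" using dr A unfolding delta_ring_def by blast
  then show ?case unfolding e .
qed

lemma dr_UN:
  fixes A :: "nat \<Rightarrow> 'a set"
  assumes dr: "delta_ring R \<RR>" and A: "\<forall>k<n. A k \<in> \<RR>"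
  shows "(\<Union>k<n. A k) \<in> \<RR>"
  using A
proof (induction n)
  case 0
  then show ?case using dr unfolding delta_ring_def by auto
next
  case (Suc n)
  have "(\<Union>k<Suc n. A k) = (\<Union>k<n. A k) \<union> A n" by (auto simp: lessThan_Suc)
  then show ?case using Suc dr unfolding delta_ring_def by auto
qed

lemma sum_ind_at:
  fixes b :: "nat \<Rightarrow> real"
  assumes disj: "disjoint_family_on A {..<n}" and k: "k < n" and r: "r \<in> A k"
  shows "(\<Sum>j<n. b j * indicator (A j) r) = b k"
proof -
  have "(\<Sum>j<n. b j * indicator (A j) r) = b k * indicator (A k) r + (\<Sum>j\<in>{..<n} - {k}. b j * indicator (A j) r)"
    using k by (subst sum.remove[of _ k]) auto
  also have "(\<Sum>j\<in>{..<n} - {k}. b j * indicator (A j) r) = 0"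
  proof (rule sum.neutral, intro ballI)
    fix j assume j: "j \<in> {..<n} - {k}"
    then have "A j \<inter> A k = {}" using disj k unfolding disjoint_family_on_def by auto
    then show "b j * indicator (A j) r = 0" using r by (auto simp: indicator_def)
  qed
  finally show ?thesis using r by simp
qed

lemma sum_ind_out:
  fixes b :: "nat \<Rightarrow> real"
  assumes "\<And>k. k < n \<Longrightarrow> r \<notin> A k"
  shows "(\<Sum>j<n. b j * indicator (A j) r) = 0"
  using assms by (intro sum.neutral) auto

lemma sum_ind_val:
  fixes b :: "nat \<Rightarrow> real"
  assumes disj: "disjoint_family_on A {..<n}"
  shows "(\<Sum>j<n. b j * indicator (A j) r) \<in> insert 0 (b ` {..<n})"
proof (cases "\<exists>k<n. r \<in> A k")
  case True
  then obtain k where "k < n" "r \<in> A k" by auto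
  then show ?thesis using sum_ind_at[OF disj] by auto
next
  case False
  then show ?thesis using sum_ind_out[of n r A b] by auto
qed

lemma meas_finite_comp:
  fixes F :: "real \<Rightarrow> 'a \<Rightarrow> real" and u :: "'a \<Rightarrow> real"
  assumes V: "finite V" and uV: "\<And>r. r \<in> space N \<Longrightarrow> u r \<in> V"
    and um: "u \<in> borel_measurable N" and Fm: "\<And>v. F v \<in> borel_measurable N"
  shows "(\<lambda>r. F (u r) r) \<in> borel_measurable N"
proof -
  have eq: "F (u r) r = (\<Sum>v\<in>V. indicator {r\<in>space N. u r = v} r * F v r)" if r: "r \<in> space N" for r
  proof -
    have "(\<Sum>v\<in>V. indicator {r\<in>space N. u r = v} r * F v r) = (\<Sum>v\<in>V. if v = u r then F v r else 0)"
      using r by (intro sum.cong) (auto simp: indicator_def)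
    also have "\<dots> = F (u r) r" using V uV[OF r] by (simp add: sum.delta')
    finally show ?thesis by simp
  qed
  have sets: "{r\<in>space N. u r = v} \<in> sets N" for v using um by measurable
  have "(\<lambda>r. \<Sum>v\<in>V. indicator {r\<in>space N. u r = v} r * F v r) \<in> borel_measurable N"
    by (intro borel_measurable_sum borel_measurable_times borel_measurable_indicator sets Fm)
  then show ?thesis by (rule measurable_cong[THEN iffD1, rotated]) (simp add: eq)
qed

lemma Sup_unbdd: "\<not> bdd_above (X::real set) \<Longrightarrow> Sup X = (LEAST z::real. False)"
proof -
  assume "\<not> bdd_above X"
  then have "(\<lambda>z. \<forall>x\<in>X. x \<le> z) = (\<lambda>z. False)" by (auto simp: bdd_above_def fun_eq_iff)
  then show ?thesis unfolding Sup_real_def by simp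
qed

theorem lemma3p8:
  fixes P :: "'w measure" and R :: "'r set" and \<RR> :: "'r set set"
    and \<Theta> :: "'r set \<Rightarrow> 'w \<Rightarrow> real"
    and ap am q0 chi :: "'r measure" and lam0 :: "('r \<times> real) measure"
    and a :: "'r \<Rightarrow> real" and \<kappa> :: "'r \<Rightarrow> real measure"
    and f :: "'r \<Rightarrow> real"
  assumes ID: "ID_random_measure P R \<RR> \<Theta>"
    \<comment> \<open>the signed measure a0 = ap - am (Jordan decomposition), and q0, on sigma(\<RR>)\<close>
    and sets_ap: "sets ap = sets (sigma R \<RR>)"
    and sets_am: "sets am = sets (sigma R \<RR>)"
    and sing: "\<exists>S \<in> sets (sigma R \<RR>). emeasure ap (R - S) = 0 \<and> emeasure am S = 0"
    and fin_a: "\<forall>A\<in>\<RR>. emeasure ap A < \<infinity> \<and> emeasure am A < \<infinity>"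
    and sets_q0: "sets q0 = sets (sigma R \<RR>)"
    and fin_q0: "\<forall>A\<in>\<RR>. emeasure q0 A < \<infinity>"
    \<comment> \<open>the sigma-finite measure lambda0 on sigma(\<RR>) x B(R)\<close>
    and sets_lam0: "sets lam0 = sets (sigma R \<RR> \<Otimes>\<^sub>M borel)"
    and sf_lam0: "sigma_finite_measure lam0"
    and levy_lam0: "\<forall>A\<in>\<RR>. emeasure lam0 (A \<times> {0}) = 0 \<and>
                    (\<integral>\<^sup>+x. indicator (A \<times> UNIV) x * ennreal (min ((snd x)\<^sup>2) 1) \<partial>lam0) < \<infinity>"
    \<comment> \<open>Levy-Khintchine representation of the values of Theta\<close>
    and LK: "\<forall>A\<in>\<RR>. \<forall>\<beta>::real. char (distr P borel (\<Theta> A)) \<beta> =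
              exp (\<i> * complex_of_real (\<beta> * (measure ap A - measure am A))
                   - complex_of_real (\<beta>\<^sup>2 / 2 * measure q0 A)
                   + set_lebesgue_integral lam0 (A \<times> UNIV)
                       (\<lambda>x. iexp (\<beta> * snd x) - 1 - \<i> * complex_of_real (\<beta> * tau (snd x))))"
    \<comment> \<open>the control measure chi\<close>
    and sets_chi: "sets chi = sets (sigma R \<RR>)"
    and chi_def: "\<forall>A\<in>sets (sigma R \<RR>). emeasure chi A =
              emeasure ap A + emeasure am A + emeasure q0 A +
              (\<integral>\<^sup>+x. indicator (A \<times> UNIV) x * ennreal (min ((snd x)\<^sup>2) 1) \<partial>lam0)"
    \<comment> \<open>a = d a0 / d chi\<close>
    and a_meas: "a \<in> borel_measurable chi"
    and a_dens: "\<forall>A\<in>\<RR>. set_integrable chi A a \<and>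
              measure ap A - measure am A = set_lebesgue_integral chi A a"
    \<comment> \<open>kappa is a kernel with lambda0(dr, d beta) = kappa(r, d beta) chi(dr)\<close>
    and \<kappa>_sets: "\<forall>r. sets (\<kappa> r) = sets borel"
    and \<kappa>_meas: "\<forall>B\<in>sets borel. (\<lambda>r. emeasure (\<kappa> r) B) \<in> borel_measurable chi"
    and \<kappa>_disint: "\<forall>X\<in>sets lam0. emeasure lam0 X = (\<integral>\<^sup>+r. emeasure (\<kappa> r) (Pair r -` X) \<partial>chi)"
    and f: "f \<in> S_det \<RR>"
  shows "(\<integral>r. (SUP \<beta>\<in>{-1..1}. aTheta a \<kappa> r (\<beta> * f r)) \<partial>chi) =
         (SUP \<gamma>\<in>S1_det \<RR>. (\<integral>r. aTheta a \<kappa> r (\<gamma> r * f r) \<partial>chi))"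
  proof -
  have adm: "admissible_space R \<RR>" using ID by (simp add: ID_random_measure_def)
  then have dr: "delta_ring R \<RR>" by (simp add: admissible_space_def)
  have RP: "\<RR> \<subseteq> Pow R" using dr by (simp add: delta_ring_def)
  have sS: "sets (sigma R \<RR>) = sigma_sets R \<RR>" using RP by (rule sets_measure_of)
  have spS: "space (sigma R \<RR>) = R" using RP by (rule space_measure_of)
  have sc: "sets chi = sigma_sets R \<RR>" using sets_chi sS by simp
  have spc: "space chi = R" using sets_eq_imp_space_eq[OF sets_chi] spS by simp
  have Rin: "B \<in> sets chi" if "B \<in> \<RR>" for B using that sc by auto
  have ks: "\<And>r. sets (\<kappa> r) = sets borel" using \<kappa>_sets by simp
  have aT: "aTheta a \<kappa> r al = gg (\<kappa> r) (a r) al" for r al unfolding aTheta_def gg_def phi_def by simp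
  have aT0: "aTheta a \<kappa> r 0 = 0" for r unfolding aT by (rule gg_0)
  have aTm: "(\<lambda>r. aTheta a \<kappa> r al) \<in> borel_measurable chi" for al
    unfolding aT gg_def
    by (intro borel_measurable_add borel_measurable_times measurable_const a_meas kernel_int_meas[OF ks \<kappa>_meas phi_meas]) auto
  have compm: "(\<lambda>r. aTheta a \<kappa> r (u r)) \<in> borel_measurable chi"
    if "u \<in> borel_measurable chi" "finite V" "\<And>r. u r \<in> V" for u V
    by (rule meas_finite_comp[where F="\<lambda>al r. aTheta a \<kappa> r al"]) (use that aTm in auto)

  obtain n :: nat and \<beta> :: "nat \<Rightarrow> real" and A :: "nat \<Rightarrow> 'r set" where A: "\<forall>k<n. A k \<in> \<RR>" and disj: "disjoint_family_on A {..<n}"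
      and fdef: "f = (\<lambda>r. \<Sum>k<n. \<beta> k * indicator (A k) r)"
  proof -
    from f have "\<exists>(n::nat) (\<beta>::nat \<Rightarrow> real) (A::nat \<Rightarrow> 'r set). (\<forall>k<n. A k \<in> \<RR>) \<and> disjoint_family_on A {..<n} \<and> f = (\<lambda>r. \<Sum>k<n. \<beta> k * indicator (A k) r)"
      unfolding S_det_def by (rule CollectD)
    then show ?thesis using that by blast
  qed
  define U where "U = (\<Union>k<n. A k)"
  have UR: "U \<in> \<RR>" unfolding U_def by (rule dr_UN[OF dr A])
  have Us: "U \<in> sets chi" using Rin UR by blast
  have UsS: "U \<in> sets (sigma R \<RR>)" using Us sets_chi by simp
  have UsubR: "U \<subseteq> R" using UR RP by auto
  have fU: "f r = 0" if "r \<notin> U" for r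
    unfolding fdef using that by (intro sum_ind_out) (auto simp: U_def)
  define M where "M = 1 + (\<Sum>k<n. \<bar>\<beta> k\<bar>)"
  have M1: "1 \<le> M" unfolding M_def by (simp add: sum_nonneg)
  have fM: "\<bar>f r\<bar> \<le> M" for r
  proof (cases "\<exists>k<n. r \<in> A k")
    case True
    then obtain k where k: "k < n" "r \<in> A k" by auto
    then have "f r = \<beta> k" unfolding fdef by (intro sum_ind_at[OF disj])
    moreover have "\<bar>\<beta> k\<bar> \<le> (\<Sum>k<n. \<bar>\<beta> k\<bar>)" using k by (intro member_le_sum) auto
    ultimately show ?thesis unfolding M_def by simp
  next
    case False
    then have "f r = 0" unfolding fdef by (intro sum_ind_out) auto
    then show ?thesis using M1 by simp
  qed
  define Vf where "Vf = insert 0 (\<beta> ` {..<n})"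
  have fV: "f r \<in> Vf" for r unfolding fdef Vf_def by (rule sum_ind_val[OF disj])
  have Vff: "finite Vf" unfolding Vf_def by simp
  have fm: "f \<in> borel_measurable chi" unfolding fdef
    by (intro borel_measurable_sum borel_measurable_times measurable_const borel_measurable_indicator)
       (use A Rin in auto)

  define L where "L r = (\<integral>\<^sup>+x. ennreal (min (x\<^sup>2) 1) \<partial>\<kappa> r)" for r
  have mmb: "(\<lambda>x::real. ennreal (min (x\<^sup>2) 1)) \<in> borel_measurable borel" by measurable
  have Lm: "L \<in> borel_measurable chi" unfolding L_def by (rule kernel_nn_meas[OF ks \<kappa>_meas mmb])
  have "(\<integral>\<^sup>+r. indicator U r * L r \<partial>chi) = (\<integral>\<^sup>+p. indicator (U \<times> UNIV) p * ennreal (min ((snd p)\<^sup>2) 1) \<partial>lam0)"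
    using disint[OF sets_lam0 sets_chi ks \<kappa>_meas \<kappa>_disint UsS mmb] by (simp add: L_def)
  also have "\<dots> < \<infinity>" using levy_lam0 UR by auto
  finally have LU: "(\<integral>\<^sup>+r. indicator U r * L r \<partial>chi) < \<infinity>" .
  have AEL: "AE r in chi. r \<in> U \<longrightarrow> L r < \<infinity>"
  proof -
    have "AE r in chi. indicator U r * L r \<noteq> \<infinity>"
      by (rule nn_integral_noteq_infinite) (use Lm Us LU in auto)
    then show ?thesis by eventually_elim (auto simp: indicator_def top.not_eq_extremum)
  qed

  define W where "W r = indicator U r * (M * \<bar>a r\<bar> + M^3 * enn2real (L r))" for r
  have bnd: "\<bar>aTheta a \<kappa> r (b * f r)\<bar> \<le> W r" if g: "r \<in> U \<longrightarrow> L r < \<infinity>" and b: "\<bar>b\<bar> \<le> 1" for r b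
  proof (cases "r \<in> U")
    case True
    have "\<bar>b\<bar> * \<bar>f r\<bar> \<le> 1 * M" by (rule mult_mono) (use b fM[of r] in auto)
    then have "\<bar>b * f r\<bar> \<le> M" by (simp add: abs_mult)
    then have "\<bar>gg (\<kappa> r) (a r) (b * f r)\<bar> \<le> M * \<bar>a r\<bar> + M^3 * enn2real (L r)"
      unfolding L_def using gg_bound[OF ks, of r "b * f r" M "a r"] g True M1 by (auto simp: L_def)
    then show ?thesis using True unfolding W_def aT by simp
  next
    case False
    then show ?thesis using fU[OF False] aT0 by (simp add: W_def)
  qed
  define h where "h r = (SUP b\<in>{-1..1}. aTheta a \<kappa> r (b * f r))" for r
  have bddh: "bdd_above ((\<lambda>b. aTheta a \<kappa> r (b * f r)) ` {-1..1})" if g: "r \<in> U \<longrightarrow> L r < \<infinity>" for r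
    using bnd[OF g] by (intro bdd_aboveI[of _ "W r"]) (auto simp: abs_le_iff)
  have hle: "aTheta a \<kappa> r (b * f r) \<le> h r" if g: "r \<in> U \<longrightarrow> L r < \<infinity>" and b: "b \<in> {-1..1}" for r b
    unfolding h_def by (rule cSUP_upper[OF b bddh[OF g]])
  have h0: "0 \<le> h r" if g: "r \<in> U \<longrightarrow> L r < \<infinity>" for r
    using hle[OF g, of 0] aT0 by simp
  have hW: "h r \<le> W r" if g: "r \<in> U \<longrightarrow> L r < \<infinity>" for r
    unfolding h_def using bnd[OF g] by (intro cSUP_least) (auto simp: abs_le_iff)

  define Q where "Q = \<rat> \<inter> {-1..1::real}"
  have cQ: "countable Q" unfolding Q_def by (intro countable_Int1 countable_rat)
  have Q0: "0 \<in> Q" unfolding Q_def by auto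
  then have Qne: "Q \<noteq> {}" by auto
  define qq where "qq j = (if j = 0 then 0 else from_nat_into Q (j - 1))" for j :: nat
  have qqQ: "qq j \<in> Q" for j unfolding qq_def using Q0 from_nat_into[OF Qne] by auto
  have rqq: "range qq = Q"
  proof
    show "range qq \<subseteq> Q" using qqQ by auto
    show "Q \<subseteq> range qq"
    proof
      fix q assume q: "q \<in> Q"
      have "qq (Suc (to_nat_on Q q)) = q" unfolding qq_def using from_nat_into_to_nat_on[OF cQ q] by simp
      then show "q \<in> range qq" by (metis rangeI)
    qed
  qed
  have qq1: "qq j \<in> {-1..1}" for j using qqQ[of j] unfolding Q_def by auto
  have qq0: "qq 0 = 0" unfolding qq_def by simp
  define G where "G j r = aTheta a \<kappa> r (qq j * f r)" for j r
  have Gm: "G j \<in> borel_measurable chi" for j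
    unfolding G_def
    by (rule compm[where V="(\<lambda>v. qq j * v) ` Vf"]) (use fm Vff fV in auto)
  have hG: "h r = Sup (range (\<lambda>j. G j r))" for r
  proof -
    have "h r = (SUP b\<in>{-1..1}. gg (\<kappa> r) (a r) (b * f r))" unfolding h_def aT by simp
    also have "\<dots> = (SUP q\<in>Q. gg (\<kappa> r) (a r) (q * f r))" unfolding Q_def by (rule sup_eq_rat[OF ks])
    also have "\<dots> = Sup ((\<lambda>q. gg (\<kappa> r) (a r) (q * f r)) ` range qq)" by (simp add: rqq)
    also have "\<dots> = Sup (range (\<lambda>j. G j r))" unfolding G_def aT by (simp add: image_comp)
    finally show ?thesis .
  qed
  have G0: "G 0 r = 0" for r unfolding G_def qq0 using aT0 by simp
  have GW: "G j r \<le> W r" if g: "r \<in> U \<longrightarrow> L r < \<infinity>" for j r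
    using bnd[OF g, of "qq j"] qq1[of j] unfolding G_def by (auto simp: abs_le_iff)

  define Bs where "Bs m j = {r \<in> U. (\<forall>i\<le>m. G i r \<le> G j r) \<and> (\<forall>i<j. \<exists>i'\<le>m. G i r < G i' r)}" for m j :: nat
  define gam where "gam m r = (\<Sum>j<Suc m. qq j * indicator (Bs m j) r)" for m r
  define H where "H m r = aTheta a \<kappa> r (gam m r * f r)" for m r
  have BsR: "Bs m j \<in> \<RR>" for m j
  proof -
    note Gm[measurable]
    have E: "{r \<in> space chi. (\<forall>i\<le>m. G i r \<le> G j r) \<and> (\<forall>i<j. \<exists>i'\<le>m. G i r < G i' r)} \<in> sets chi"
      by measurable
    have "Bs m j = U \<inter> {r \<in> space chi. (\<forall>i\<le>m. G i r \<le> G j r) \<and> (\<forall>i<j. \<exists>i'\<le>m. G i r < G i' r)}"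
      unfolding Bs_def using UsubR spc by auto
    then show ?thesis using dr_inter[OF dr UR] E sc by simp
  qed
  have Bs_disj: "disjoint_family_on (Bs m) {..<Suc m}" for m
  proof (unfold disjoint_family_on_def, intro ballI impI)
    fix j j' assume jj: "j \<in> {..<Suc m}" "j' \<in> {..<Suc m}" "j \<noteq> j'"
    show "Bs m j \<inter> Bs m j' = {}"
    proof (rule ccontr)
      assume "Bs m j \<inter> Bs m j' \<noteq> {}"
      then obtain r where r: "r \<in> Bs m j" "r \<in> Bs m j'" by auto
      show False
      proof (cases "j < j'")
        case True
        then obtain i' where "i' \<le> m" "G j r < G i' r" using r(2) unfolding Bs_def by auto
        moreover have "G i' r \<le> G j r" using r(1) \<open>i' \<le> m\<close> unfolding Bs_def by auto
        ultimately show False by simp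
      next
        case False
        then have "j' < j" using jj by simp
        then obtain i' where "i' \<le> m" "G j' r < G i' r" using r(1) unfolding Bs_def by auto
        moreover have "G i' r \<le> G j' r" using r(2) \<open>i' \<le> m\<close> unfolding Bs_def by auto
        ultimately show False by simp
      qed
    qed
  qed
  have Bs_ex: "\<exists>j\<le>m. r \<in> Bs m j" if r: "r \<in> U" for m r
  proof -
    define P where "P j \<longleftrightarrow> j \<le> m \<and> (\<forall>i\<le>m. G i r \<le> G j r)" for j
    have fin: "finite ((\<lambda>i. G i r) ` {..m})" "(\<lambda>i. G i r) ` {..m} \<noteq> {}" by auto
    obtain jm where jm: "jm \<le> m" "G jm r = Max ((\<lambda>i. G i r) ` {..m})"
    proof -
      from Max_in[OF fin] obtain i where "i \<in> {..m}" "Max ((\<lambda>i. G i r) ` {..m}) = G i r" by (auto simp: image_iff)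
      then show ?thesis using that[of i] by auto
    qed
    have "P jm" unfolding P_def using jm fin by auto
    define j0 where "j0 = (LEAST j. P j)"
    have Pj0: "P j0" unfolding j0_def by (rule LeastI[of P, OF \<open>P jm\<close>])
    have nP: "\<not> P i" if "i < j0" for i using not_less_Least[of i P] that unfolding j0_def by blast
    have "\<forall>i<j0. \<exists>i'\<le>m. G i r < G i' r"
    proof (intro allI impI)
      fix i assume i: "i < j0"
      then have "i \<le> m" using Pj0 unfolding P_def by simp
      then show "\<exists>i'\<le>m. G i r < G i' r" using nP[OF i] unfolding P_def by (auto simp: not_le)
    qed
    then have "r \<in> Bs m j0" using Pj0 r unfolding Bs_def P_def by auto
    then show ?thesis using Pj0 unfolding P_def by auto
  qed
  have Hprop: "(\<forall>i\<le>m. G i r \<le> H m r) \<and> (\<exists>j\<le>m. H m r = G j r)" for m r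
  proof (cases "r \<in> U")
    case True
    obtain j where j: "j \<le> m" "r \<in> Bs m j" using Bs_ex[OF True] by auto
    have "gam m r = qq j" unfolding gam_def by (rule sum_ind_at[OF Bs_disj]) (use j in auto)
    then have "H m r = G j r" unfolding H_def G_def by simp
    then show ?thesis using j unfolding Bs_def by auto
  next
    case False
    have "gam m r = 0" unfolding gam_def by (rule sum_ind_out) (use False in \<open>auto simp: Bs_def\<close>)
    then have e1: "H m r = G 0 r" and e2: "\<And>i. G i r = G 0 r" unfolding H_def G_def using fU[OF False] by auto
    show ?thesis
    proof (intro conjI allI impI exI[of _ 0])
      fix i assume "i \<le> m" show "G i r \<le> H m r" using e1 e2[of i] by linarith
    qed (use e1 in auto)
  qed
  have gamS: "gam m \<in> S1_det \<RR>" for m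
    unfolding S1_det_def gam_def
    using BsR Bs_disj qq1 by (intro CollectI exI[of _ "Suc m"] exI[of _ qq] exI[of _ "Bs m"]) (auto simp: abs_le_iff)
  have gamm: "gam m \<in> borel_measurable chi" for m
    unfolding gam_def
    by (intro borel_measurable_sum borel_measurable_times measurable_const borel_measurable_indicator)
       (use BsR Rin in auto)
  have Hm: "H m \<in> borel_measurable chi" for m
  proof -
    have "gam m r * f r \<in> (\<lambda>(x, y). x * y) ` (insert 0 (qq ` {..<Suc m}) \<times> Vf)" for r
      using sum_ind_val[OF Bs_disj, of qq m r] fV[of r] unfolding gam_def by auto
    then show ?thesis unfolding H_def
      by (intro compm[where V="(\<lambda>(x, y). x * y) ` (insert 0 (qq ` {..<Suc m}) \<times> Vf)"])
         (use gamm fm Vff in auto)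
  qed
  define c0 where "c0 = (LEAST z::real. False)"
  define Bd where "Bd = {r \<in> space chi. \<exists>N::nat. \<forall>j. G j r \<le> real N}"
  have Bds: "Bd \<in> sets chi"
  proof -
    note Gm[measurable]
    show ?thesis unfolding Bd_def by measurable
  qed
  have bddBd: "bdd_above (range (\<lambda>j. G j r)) \<longleftrightarrow> (\<exists>N::nat. \<forall>j. G j r \<le> real N)" for r
  proof
    assume "bdd_above (range (\<lambda>j. G j r))"
    then obtain K where K: "\<And>j. G j r \<le> K" by (auto simp: bdd_above_def)
    obtain N :: nat where "K \<le> real N" using real_arch_simple by blast
    then show "\<exists>N::nat. \<forall>j. G j r \<le> real N" using K by (meson order_trans)
  next
    assume "\<exists>N::nat. \<forall>j. G j r \<le> real N"
    then show "bdd_above (range (\<lambda>j. G j r))" by (auto simp: bdd_above_def)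
  qed
  have Hlim: "(\<lambda>m. H m r) \<longlonglongrightarrow> h r" if bd: "bdd_above (range (\<lambda>j. G j r))" for r
  proof (rule LIMSEQ_I)
    fix e :: real assume e: "0 < e"
    have hr: "h r = Sup (range (\<lambda>j. G j r))" by (rule hG)
    have "h r - e < Sup (range (\<lambda>j. G j r))" using e hr by simp
    then obtain j where j: "h r - e < G j r" using less_cSupD[of "range (\<lambda>j. G j r)"] by auto
    show "\<exists>no. \<forall>m\<ge>no. norm (H m r - h r) < e"
    proof (intro exI allI impI)
      fix m assume m: "j \<le> m"
      have "G j r \<le> H m r" using Hprop[of m r] m by auto
      moreover obtain j' where "H m r = G j' r" using Hprop[of m r] by auto
      then have "H m r \<le> h r" unfolding hr using bd by (auto intro: cSUP_upper)
      ultimately show "norm (H m r - h r) < e" using j by auto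
    qed
  qed
  have hm: "h \<in> borel_measurable chi"
  proof (rule borel_measurable_LIMSEQ_real[where u="\<lambda>m r. if r \<in> Bd then H m r else c0"])
    fix r assume r: "r \<in> space chi"
    show "(\<lambda>m. if r \<in> Bd then H m r else c0) \<longlonglongrightarrow> h r"
    proof (cases "r \<in> Bd")
      case True
      then have "bdd_above (range (\<lambda>j. G j r))" using bddBd unfolding Bd_def by auto
      then show ?thesis using Hlim True by simp
    next
      case False
      then have "\<not> bdd_above (range (\<lambda>j. G j r))" using bddBd r unfolding Bd_def by auto
      then have "h r = c0" unfolding hG c0_def by (rule Sup_unbdd)
      then show ?thesis using False by simp
    qed
  next
    fix m
    have "Bd \<inter> space chi \<in> sets chi" using Bds by auto
    then show "(\<lambda>r. if r \<in> Bd then H m r else c0) \<in> borel_measurable chi"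
      by (rule measurable_If_set[OF Hm measurable_const, rotated]) simp
  qed

  have Wi: "integrable chi W"
  proof -
    have i1: "integrable chi (\<lambda>r. indicator U r * \<bar>a r\<bar>)"
    proof -
      have "set_integrable chi U a" using a_dens UR by blast
      then have "set_integrable chi U (\<lambda>r. \<bar>a r\<bar>)" by (rule set_integrable_abs)
      then show ?thesis by (simp add: set_integrable_def)
    qed
    have i2: "integrable chi (\<lambda>r. indicator U r * enn2real (L r))"
    proof (rule integrableI_bounded)
      show "(\<lambda>r. indicator U r * enn2real (L r)) \<in> borel_measurable chi"
        using Lm Us by measurable
      have "(\<integral>\<^sup>+r. ennreal (norm (indicator U r * enn2real (L r))) \<partial>chi) \<le> (\<integral>\<^sup>+r. indicator U r * L r \<partial>chi)"
      proof (rule nn_integral_mono)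
        fix r
        have "ennreal (enn2real (L r)) \<le> L r" by (cases "L r = \<infinity>") (auto simp: ennreal_enn2real_if)
        then show "ennreal (norm (indicator U r * enn2real (L r))) \<le> indicator U r * L r"
          by (auto simp: indicator_def)
      qed
      then show "(\<integral>\<^sup>+r. ennreal (norm (indicator U r * enn2real (L r))) \<partial>chi) < \<infinity>"
        using LU by (simp add: order_le_less_trans)
    qed
    have "W = (\<lambda>r. M * (indicator U r * \<bar>a r\<bar>) + M^3 * (indicator U r * enn2real (L r)))"
      unfolding W_def by (auto simp: fun_eq_iff algebra_simps)
    then show ?thesis using i1 i2 by simp
  qed
  have good: "AE r in chi. r \<in> U \<longrightarrow> L r < \<infinity>" by (rule AEL)
  have limH: "(\<lambda>m. \<integral>r. H m r \<partial>chi) \<longlonglongrightarrow> (\<integral>r. h r \<partial>chi)"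
  proof (rule integral_dominated_convergence[where w=W])
    show "h \<in> borel_measurable chi" by (rule hm)
    show "\<And>m. H m \<in> borel_measurable chi" by (rule Hm)
    show "integrable chi W" by (rule Wi)
    show "AE r in chi. (\<lambda>m. H m r) \<longlonglongrightarrow> h r"
      using good
    proof eventually_elim
      case (elim r)
      then have "bdd_above (range (\<lambda>j. G j r))" using GW[OF elim] by (intro bdd_aboveI[of _ "W r"]) auto
      then show ?case by (rule Hlim)
    qed
    fix m
    show "AE r in chi. norm (H m r) \<le> W r"
      using good
    proof eventually_elim
      case (elim r)
      have "G 0 r \<le> H m r" using Hprop[of m r] by auto
      then have "0 \<le> H m r" using G0 by simp
      moreover obtain j where "H m r = G j r" using Hprop[of m r] by auto
      then have "H m r \<le> W r" using GW[OF elim] by simp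
      ultimately show ?case by simp
    qed
  qed
  have hi: "integrable chi h"
  proof (rule Bochner_Integration.integrable_bound[OF Wi hm])
    show "AE r in chi. norm (h r) \<le> norm (W r)"
      using good
    proof eventually_elim
      case (elim r)
      then show ?case using h0[OF elim] hW[OF elim] by simp
    qed
  qed
  have rhs_le: "(\<integral>r. aTheta a \<kappa> r (\<gamma> r * f r) \<partial>chi) \<le> (\<integral>r. h r \<partial>chi)" if \<gamma>: "\<gamma> \<in> S1_det \<RR>" for \<gamma>
  proof -
    from \<gamma> have "\<exists>(n::nat) (b::nat \<Rightarrow> real) (B::nat \<Rightarrow> 'r set). (\<forall>k<n. B k \<in> \<RR> \<and> \<bar>b k\<bar> \<le> 1) \<and>
        disjoint_family_on B {..<n} \<and> \<gamma> = (\<lambda>r. \<Sum>k<n. b k * indicator (B k) r)"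
      unfolding S1_det_def by (rule CollectD)
    then obtain n' :: nat and b :: "nat \<Rightarrow> real" and B :: "nat \<Rightarrow> 'r set"
      where b1: "\<forall>k<n'. B k \<in> \<RR> \<and> \<bar>b k\<bar> \<le> 1" and dB: "disjoint_family_on B {..<n'}"
        and gd: "\<gamma> = (\<lambda>r. \<Sum>k<n'. b k * indicator (B k) r)" by blast
    have g1: "\<gamma> r \<in> {-1..1}" for r
      using sum_ind_val[OF dB, of b r] b1 unfolding gd by (auto simp: abs_le_iff)
    show ?thesis
    proof (cases "integrable chi (\<lambda>r. aTheta a \<kappa> r (\<gamma> r * f r))")
      case True
      show ?thesis
      proof (rule integral_mono_AE[OF True hi])
        show "AE r in chi. aTheta a \<kappa> r (\<gamma> r * f r) \<le> h r"
          using good by eventually_elim (rule hle[OF _ g1])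
      qed
    next
      case False
      then have "(\<integral>r. aTheta a \<kappa> r (\<gamma> r * f r) \<partial>chi) = 0" by (rule not_integrable_integral_eq)
      moreover have "AE r in chi. 0 \<le> h r" using good by eventually_elim (rule h0)
      then have "0 \<le> (\<integral>r. h r \<partial>chi)" by (rule integral_nonneg_AE)
      ultimately show ?thesis by simp
    qed
  qed
  have ne: "S1_det \<RR> \<noteq> {}"
  proof -
    have "(\<lambda>r. \<Sum>k<(0::nat). (0::real) * indicator ({}::'r set) r) \<in> S1_det \<RR>"
      unfolding S1_det_def by (intro CollectI exI[of _ "0::nat"] exI[of _ "\<lambda>_. 0"] exI[of _ "\<lambda>_. {}"]) (auto simp: disjoint_family_on_def)
    then show ?thesis by blast
  qed
  have bddR: "bdd_above ((\<lambda>\<gamma>. \<integral>r. aTheta a \<kappa> r (\<gamma> r * f r) \<partial>chi) ` S1_det \<RR>)"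
    using rhs_le by (intro bdd_aboveI[of _ "\<integral>r. h r \<partial>chi"]) auto
  have le1: "(SUP \<gamma>\<in>S1_det \<RR>. \<integral>r. aTheta a \<kappa> r (\<gamma> r * f r) \<partial>chi) \<le> (\<integral>r. h r \<partial>chi)"
    by (rule cSUP_least[OF ne rhs_le])
  have le2: "(\<integral>r. h r \<partial>chi) \<le> (SUP \<gamma>\<in>S1_det \<RR>. \<integral>r. aTheta a \<kappa> r (\<gamma> r * f r) \<partial>chi)"
  proof (rule LIMSEQ_le_const2[OF limH], intro exI allI impI)
    fix m
    have "(\<integral>r. H m r \<partial>chi) = (\<integral>r. aTheta a \<kappa> r (gam m r * f r) \<partial>chi)" unfolding H_def by simp
    also have "\<dots> \<le> (SUP \<gamma>\<in>S1_det \<RR>. \<integral>r. aTheta a \<kappa> r (\<gamma> r * f r) \<partial>chi)"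
      by (rule cSUP_upper[OF gamS bddR])
    finally show "(\<integral>r. H m r \<partial>chi) \<le> (SUP \<gamma>\<in>S1_det \<RR>. \<integral>r. aTheta a \<kappa> r (\<gamma> r * f r) \<partial>chi)" .
  qed
  have "(\<lambda>r. SUP \<beta>\<in>{-1..1}. aTheta a \<kappa> r (\<beta> * f r)) = h" by (simp add: h_def fun_eq_iff)
  then show ?thesis using le1 le2 by simp
qed

end
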